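(* Let $N_d \le N_m$ be positive integers, let $\Phi_{\mathbf{y}} \in \mathbb{C}^{N_m \times N_m}$ be Hermitian positive definite with largest and smallest eigenvalues $\lambda_{max}$ and $\lambda_{min}$, let $\mathbf{g} \in \mathbb{C}^{N_m}$ be nonzero, and let $\mathbf{\Psi} \in \mathbb{C}^{N_d \times N_m}$. Let $\delta \in (0,1)$ be such that (i) every eigenvalue of $\mathbf{\Psi}\mathbf{\Psi}^H$ lies in $[1-\delta,\,1+\delta]$, and (ii) $(1-\delta)\|\mathbf{g}\|^2 \le \|\mathbf{\Psi}\mathbf{g}\|^2 \le (1+\delta)\|\mathbf{g}\|^2$. Define the full-complexity MVDR output power $p_{MVDR} = \left(\mathbf{g}^H \Phi_{\mathbf{y}}^{-1}\mathbf{g}\right)^{-1}$, the compressed MVDR output power $p_{CMVDR} = \left(\mathbf{g}^H \mathbf{\Psi}^H (\mathbf{\Psi}\Phi_{\mathbf{y}}\mathbf{\Psi}^H)^{-1}\mathbf{\Psi}\mathbf{g}\right)^{-1}$, and the regret $R = p_{CMVDR} - p_{MVDR}$. Then $$\frac{\lambda_{min}}{\|\mathbf{g}\|^2} \le p_{MVDR} \le \frac{\lambda_{max}}{\|\mathbf{g}\|^2},\qquad \frac{(1-\delta)\lambda_{min}}{(1+\delta)\|\mathbf{g}\|^2} \le p_{CMVDR} \le \frac{(1+\delta)\lambda_{max}}{(1-\delta)\|\mathbf{g}\|^2},$$ and consequently $$\frac{(1-\delta)\lambda_{min}}{(1+\delta)\|\mathbf{g}\|^2} - \frac{\lambda_{max}}{\|\mathbf{g}\|^2}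 \le R \le \frac{(1+\delta)\lambda_{max}}{(1-\delta)\|\mathbf{g}\|^2} - \frac{\lambda_{min}}{\|\mathbf{g}\|^2}.$$
   Context: $\Phi_{\mathbf{y}}$ models the correlation matrix of the $N_m$ microphone signals, $\mathbf{g}$ is the steering vector to the desired source, and $\mathbf{\Psi}$ is a (random) projection to $N_d$ dimensions; $p_{MVDR}$ and $p_{CMVDR}$ are the output powers of the minimum variance distortionless response beamformer in the full sensor space and in the projected space respectively. Hypotheses (i) and (ii) are the consequences of the restricted isometry property with constant $\delta$ that the paper uses. $\|\cdot\|$ is the Euclidean norm and $^H$ the conjugate transpose. *)

theory Defs
  imports "Jordan_Normal_Form.Schur_Decomposition" "Jordan_Normal_Form.Char_Poly"
          "Jordan_Normal_Form.Gauss_Jordan_Elimination"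
begin

definition cvec_norm :: "complex vec \<Rightarrow> real" where
  "cvec_norm v = sqrt (\<Sum>i<dim_vec v. (cmod (v $ i))^2)"

text \<open>Hermitian form v^H A v.\<close>
definition quad_form :: "complex mat \<Rightarrow> complex vec \<Rightarrow> complex" where
  "quad_form A v = (A *\<^sub>v v) \<bullet>c v"

definition herm_pos_def :: "nat \<Rightarrow> complex mat \<Rightarrow> bool" where
  "herm_pos_def n A \<longleftrightarrow> A \<in> carrier_mat n n \<and> mat_adjoint A = A \<and>
     (\<forall>v \<in> carrier_vec n. v \<noteq> 0\<^sub>v n \<longrightarrow> quad_form A v \<in> \<real> \<and> Re (quad_form A v) > 0)"

definition minv :: "complex mat \<Rightarrow> complex mat" where
  "minv A = the (mat_inverse A)"

text \<open>MVDR output power (g^H Phi^-1 g)^-1; the quadratic form is real for Hermitian Phi.\<close>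
definition p_mvdr :: "complex mat \<Rightarrow> complex vec \<Rightarrow> real" where
  "p_mvdr Phi g = inverse (Re (quad_form (minv Phi) g))"

definition p_cmvdr :: "complex mat \<Rightarrow> complex mat \<Rightarrow> complex vec \<Rightarrow> real" where
  "p_cmvdr Phi Psi g =
     inverse (Re (quad_form (mat_adjoint Psi * minv (Psi * Phi * mat_adjoint Psi) * Psi) g))"

end

theory Submission
  imports Defs
begin

lemma adj_carrier[simp]: "A \<in> carrier_mat r c \<Longrightarrow> mat_adjoint A \<in> carrier_mat c r"
  unfolding mat_adjoint_def by (auto simp: mat_of_rows_def)

lemma adj_dims[simp]: "dim_row (mat_adjoint A) = dim_col A" "dim_col (mat_adjoint A) = dim_row A"
  unfolding mat_adjoint_def by (auto simp: mat_of_rows_def)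

lemma adj_index[simp]: "i < dim_col A \<Longrightarrow> j < dim_row A \<Longrightarrow> mat_adjoint A $$ (i,j) = cnj (A $$ (j,i))"
  unfolding mat_adjoint_def by (auto simp: mat_of_rows_def)

lemma adj_adj: "mat_adjoint (mat_adjoint (A::complex mat)) = A"
  by (rule eq_matI, auto)

lemma adj_mult: assumes "(A::complex mat) \<in> carrier_mat r k" "B \<in> carrier_mat k c"
  shows "mat_adjoint (A * B) = mat_adjoint B * mat_adjoint A"
  by (rule eq_matI, insert assms, auto simp: scalar_prod_def cnj_sum intro!: sum.cong)

lemma cprod_sum: "dim_vec w = n \<Longrightarrow> v \<bullet>c w = (\<Sum>i<n. v $ i * cnj (w $ i))"
  unfolding scalar_prod_def by (auto simp: atLeast0LessThan)

lemma cprod_cnj: assumes "v \<in> carrier_vec n" "w \<in> carrier_vec n"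
  shows "v \<bullet>c w = cnj (w \<bullet>c v)"
  using assms by (simp add: cprod_sum cnj_sum mult.commute)

lemma cprod_adj: assumes "(B::complex mat) \<in> carrier_mat r c" "y \<in> carrier_vec c" "z \<in> carrier_vec r"
  shows "(B *\<^sub>v y) \<bullet>c z = y \<bullet>c (mat_adjoint B *\<^sub>v z)"
proof -
  have "(B *\<^sub>v y) \<bullet>c z = (\<Sum>i<r. \<Sum>j<c. B $$ (i,j) * y $ j * cnj (z $ i))"
    using assms by (simp add: cprod_sum mult_mat_vec_def scalar_prod_def atLeast0LessThan sum_distrib_right)
  also have "\<dots> = (\<Sum>j<c. \<Sum>i<r. B $$ (i,j) * y $ j * cnj (z $ i))" by (rule sum.swap)
  also have "\<dots> = y \<bullet>c (mat_adjoint B *\<^sub>v z)"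
    using assms by (simp add: cprod_sum mult_mat_vec_def scalar_prod_def atLeast0LessThan
        sum_distrib_left cnj_sum mult_ac)
  finally show ?thesis .
qed

lemma cprod_adj2: assumes "(B::complex mat) \<in> carrier_mat r c" "x \<in> carrier_vec c" "p \<in> carrier_vec r"
  shows "p \<bullet>c (B *\<^sub>v x) = (mat_adjoint B *\<^sub>v p) \<bullet>c x"
proof -
  have "p \<bullet>c (B *\<^sub>v x) = cnj ((B *\<^sub>v x) \<bullet>c p)" using assms by (intro cprod_cnj[of _ r]) auto
  also have "\<dots> = cnj (x \<bullet>c (mat_adjoint B *\<^sub>v p))" using cprod_adj[OF assms(1,2,3)] by simp
  also have "\<dots> = (mat_adjoint B *\<^sub>v p) \<bullet>c x" using assms mult_mat_vec_carrier[OF adj_carrier[OF assms(1)] assms(3)] by (subst cprod_cnj[of _ c]) auto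
  finally show ?thesis .
qed

lemma cprod_self: "v \<bullet>c v = complex_of_real (\<Sum>i<dim_vec v. (cmod (v $ i))^2)"
proof -
  have "v \<bullet>c v = (\<Sum>i<dim_vec v. complex_of_real ((cmod (v $ i))^2))"
    by (simp only: cprod_sum[OF refl] complex_norm_square conjugate_complex_def)
  then show ?thesis by (simp only: of_real_sum)
qed

lemma cvec_norm_sq: "(cvec_norm v)^2 = Re (v \<bullet>c v)"
  unfolding cvec_norm_def cprod_self by (simp add: sum_nonneg)

lemma cprod_self_nonneg: "0 \<le> Re (v \<bullet>c v)"
  unfolding cprod_self by (simp add: sum_nonneg)

lemma cprod_self_real: "v \<bullet>c v = complex_of_real (Re (v \<bullet>c v))"
  unfolding cprod_self by simp

lemma cprod_self_pos: assumes "v \<in> carrier_vec n" "v \<noteq> 0\<^sub>v n" shows "0 < Re (v \<bullet>c v)"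
proof -
  from assms obtain i where i: "i < n" "v $ i \<noteq> 0" by (metis carrier_vecD eq_vecI index_zero_vec)
  have "(cmod (v $ i))^2 \<le> (\<Sum>j<n. (cmod (v $ j))^2)"
    using i by (intro member_le_sum) auto
  moreover have "0 < (cmod (v $ i))^2" using i by simp
  ultimately have "0 < (\<Sum>j<n. (cmod (v $ j))^2)" by linarith
  then show ?thesis unfolding cprod_self using assms by simp
qed

lemma cprod_smult: assumes "x \<in> carrier_vec n" "y \<in> carrier_vec n"
  shows "(a \<cdot>\<^sub>v x) \<bullet>c (b \<cdot>\<^sub>v y) = a * cnj b * (x \<bullet>c y)"
  using assms by (simp add: cprod_sum sum_distrib_left mult_ac)

lemma onb_exists:
  fixes u :: "complex vec"
  assumes u: "u \<in> carrier_vec n" "u \<noteq> 0\<^sub>v n"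
  shows "\<exists>W c. W \<in> carrier_mat n n \<and> mat_adjoint W * W = 1\<^sub>m n \<and> W * mat_adjoint W = 1\<^sub>m n
     \<and> col W 0 = c \<cdot>\<^sub>v u \<and> c \<noteq> 0"
proof -
  interpret cof_vec_space n "TYPE(complex)" .
  define b where "b = basis_completion u"
  from basis_completion[OF u, folded b_def]
  have b: "set b \<subseteq> carrier_vec n" "distinct b" "\<not> lin_dep (set b)" "length b = n" "hd b = u"
    by auto
  define ws where "ws = gram_schmidt n b"
  from gram_schmidt_result[OF b(1-3) ws_def]
  have ws: "corthogonal ws" "set ws \<subseteq> carrier_vec n" "length ws = n" using b by auto
  have n0: "n \<noteq> 0" using u by auto
  then obtain bs where bbs: "b = u # bs" using b(4,5) by (cases b) auto
  have hdws: "hd ws = u" unfolding ws_def bbs using gram_schmidt_hd[OF u(1)] by simp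
  have ws0: "ws ! 0 = u" using hdws ws(3) n0 by (cases ws) auto
  have wsc: "i < n \<Longrightarrow> ws ! i \<in> carrier_vec n" for i using ws by auto
  have pos: "0 < Re (ws ! i \<bullet>c ws ! i)" if i: "i < n" for i
  proof -
    have "ws ! i \<bullet>c ws ! i \<noteq> 0" using corthogonalD[OF ws(1)] i ws(3) by auto
    hence "ws ! i \<noteq> 0\<^sub>v n" using i by auto
    thus ?thesis using cprod_self_pos[OF wsc[OF i]] by auto
  qed
  define nf where "nf w = complex_of_real (1 / sqrt (Re (w \<bullet>c w)))" for w :: "complex vec"
  define vs where "vs = map (\<lambda>w. nf w \<cdot>\<^sub>v w) ws"
  define W where "W = mat_of_cols n vs"
  have vsi: "i < n \<Longrightarrow> vs ! i = nf (ws ! i) \<cdot>\<^sub>v ws ! i" for i unfolding vs_def using ws by auto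
  have vsc: "i < n \<Longrightarrow> vs ! i \<in> carrier_vec n" for i using vsi wsc by auto
  have lvs: "length vs = n" unfolding vs_def using ws by auto
  have key: "vs ! j \<bullet>c vs ! i = (if i = j then 1 else 0)" if ij: "i < n" "j < n" for i j
  proof -
    have "vs ! j \<bullet>c vs ! i = nf (ws ! j) * cnj (nf (ws ! i)) * (ws ! j \<bullet>c ws ! i)"
      unfolding vsi[OF ij(1)] vsi[OF ij(2)] by (rule cprod_smult[OF wsc[OF ij(2)] wsc[OF ij(1)]])
    also have "\<dots> = (if i = j then 1 else 0)"
    proof (cases "i = j")
      case True
      define r where "r = Re (ws ! i \<bullet>c ws ! i)"
      have r: "0 < r" using pos[OF ij(1)] r_def by auto
      have e: "ws ! i \<bullet>c ws ! i = complex_of_real r" using cprod_self_real r_def by metis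
      have "nf (ws ! j) * cnj (nf (ws ! i)) * (ws ! j \<bullet>c ws ! i)
         = complex_of_real ((1 / sqrt r) * (1 / sqrt r) * r)"
        unfolding True[symmetric] nf_def e using r by (simp flip: of_real_mult)
      also have "(1 / sqrt r) * (1 / sqrt r) * r = 1" using r
        by (simp add: field_simps real_sqrt_mult[symmetric])
      finally show ?thesis using True by simp
    next
      case False
      have "ws ! j \<bullet>c ws ! i = 0" using corthogonalD[OF ws(1)] ij ws(3) False by auto
      thus ?thesis using False by simp
    qed
    finally show ?thesis .
  qed
  have W: "W \<in> carrier_mat n n" unfolding W_def using lvs by auto
  have WW: "mat_adjoint W * W = 1\<^sub>m n"
  proof (rule eq_matI)
    fix i j assume ij: "i < dim_row (1\<^sub>m n)" "j < dim_col (1\<^sub>m n)"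
    hence ij': "i < n" "j < n" by auto
    have "(mat_adjoint W * W) $$ (i, j) = (\<Sum>k<n. cnj (vs ! i $ k) * (vs ! j $ k))"
      using W ij' lvs unfolding W_def
      by (simp add: scalar_prod_def atLeast0LessThan mat_of_cols_index)
    also have "\<dots> = vs ! j \<bullet>c vs ! i" using vsc[OF ij'(1)] by (simp add: cprod_sum mult.commute)
    also have "\<dots> = 1\<^sub>m n $$ (i, j)" using key[OF ij'] ij' by simp
    finally show "(mat_adjoint W * W) $$ (i, j) = 1\<^sub>m n $$ (i, j)" .
  qed (insert W, auto)
  have WW2: "W * mat_adjoint W = 1\<^sub>m n"
    by (rule mat_mult_left_right_inverse[OF adj_carrier[OF W] W WW])
  have c0: "col W 0 = nf u \<cdot>\<^sub>v u" unfolding W_def using n0 vsc[of 0] lvs vsi[of 0] ws0 by auto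
  have "nf u \<noteq> 0" using pos[of 0] n0 ws0 unfolding nf_def by auto
  with W WW WW2 c0 show ?thesis by blast
qed

lemma qf_sum: assumes "(B::complex mat) \<in> carrier_mat n n" "x \<in> carrier_vec n"
  shows "quad_form B x = (\<Sum>i<n. (\<Sum>j<n. B $$ (i,j) * x $ j) * cnj (x $ i))"
  using assms unfolding quad_form_def
  by (simp add: cprod_sum mult_mat_vec_def scalar_prod_def atLeast0LessThan)

lemma rayleigh:
  fixes A :: "complex mat"
  assumes "A \<in> carrier_mat n n" "mat_adjoint A = A" "\<forall>k. eigenvalue A k \<longrightarrow> m \<le> Re k \<and> Re k \<le> M"
    "v \<in> carrier_vec n"
  shows "m * Re (v \<bullet>c v) \<le> Re (quad_form A v) \<and> Re (quad_form A v) \<le> M * Re (v \<bullet>c v)"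
  using assms
proof (induction n arbitrary: A v)
  case 0
  then show ?case by (simp add: quad_form_def scalar_prod_def)
next
  case (Suc n1)
  let ?n = "Suc n1"
  note A = Suc.prems(1) and herm = Suc.prems(2) and ev = Suc.prems(3) and v = Suc.prems(4)
  obtain es where es: "char_poly A = (\<Prod>a\<leftarrow>es. [:-a,1:])" "length es = ?n"
    using char_poly_factorized[OF A] by blast
  then obtain e es' where "es = e # es'" by (cases es) auto
  hence "poly (char_poly A) e = 0" using es by simp
  hence eA: "eigenvalue A e" using eigenvalue_root_char_poly[OF A] by simp
  then obtain u where u: "eigenvector A u e" unfolding eigenvalue_def by blast
  hence uc: "u \<in> carrier_vec ?n" "u \<noteq> 0\<^sub>v ?n" "A *\<^sub>v u = e \<cdot>\<^sub>v u"
    using A unfolding eigenvector_def by auto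
  obtain W c where W: "W \<in> carrier_mat ?n ?n" "mat_adjoint W * W = 1\<^sub>m ?n"
      "W * mat_adjoint W = 1\<^sub>m ?n" "col W 0 = c \<cdot>\<^sub>v u" "c \<noteq> 0"
    using onb_exists[OF uc(1,2)] by blast
  define WH where "WH = mat_adjoint W"
  have WH: "WH \<in> carrier_mat ?n ?n" using W by (simp add: WH_def)
  define B where "B = WH * A * W"
  have B: "B \<in> carrier_mat ?n ?n" using WH A W by (simp add: B_def)
  have B2: "B = WH * (A * W)" unfolding B_def using WH A W by simp
  have hB: "mat_adjoint B = B"
  proof -
    have "mat_adjoint B = mat_adjoint W * mat_adjoint (WH * A)"
      unfolding B_def using adj_mult[of "WH * A" ?n ?n W ?n] WH A W by simp
    also have "mat_adjoint (WH * A) = mat_adjoint A * mat_adjoint WH"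
      using adj_mult[OF WH A] .
    also have "\<dots> = A * W" using herm adj_adj unfolding WH_def by simp
    finally show ?thesis unfolding B2 WH_def .
  qed
  have colB: "col B 0 = e \<cdot>\<^sub>v unit_vec ?n 0"
  proof -
    have AW: "A * W \<in> carrier_mat ?n ?n" using A W(1) by simp
    have c1: "col B 0 = WH *\<^sub>v col (A * W) 0" unfolding B2 by (rule col_mult2[OF WH AW], simp)
    have c2: "col (A * W) 0 = A *\<^sub>v col W 0" by (rule col_mult2[OF A W(1)], simp)
    have "col B 0 = WH *\<^sub>v (A *\<^sub>v (c \<cdot>\<^sub>v u))" unfolding c1 c2 W(4) ..
    also have "\<dots> = WH *\<^sub>v (e \<cdot>\<^sub>v (c \<cdot>\<^sub>v u))"
      using mult_mat_vec[OF A uc(1)] uc(3) by (simp add: smult_smult_assoc mult.commute)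
    also have "\<dots> = e \<cdot>\<^sub>v (WH *\<^sub>v col W 0)" using W mult_mat_vec[OF WH] uc(1) by simp
    also have "WH *\<^sub>v col W 0 = col (WH * W) 0" by (rule col_mult2[OF WH W(1), symmetric], simp)
    also have "\<dots> = unit_vec ?n 0" using W(2) unfolding WH_def by simp
    finally show ?thesis .
  qed
  have Bi0: "i < ?n \<Longrightarrow> B $$ (i, 0) = (if i = 0 then e else 0)" for i
    using arg_cong[OF colB, of "\<lambda>w. w $ i"] B by auto
  have B0j: "j < ?n \<Longrightarrow> B $$ (0, j) = (if j = 0 then e else 0)" for j
  proof -
    assume j: "j < ?n"
    have "B $$ (0, j) = mat_adjoint B $$ (0, j)" using hB by simp
    also have "\<dots> = cnj (B $$ (j, 0))" using B j by simp
    finally show ?thesis using Bi0[OF j] Bi0[of 0] by auto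
  qed
  have "cnj (B $$ (0,0)) = mat_adjoint B $$ (0,0)" using B by simp
  hence ereal: "cnj e = e" using hB Bi0[of 0] by simp
  have "Im e = 0" using arg_cong[OF ereal, of Im] by simp
  hence ereal2: "e = complex_of_real (Re e)" by (simp add: complex_eq_iff)
  have eb: "m \<le> Re e" "Re e \<le> M" using ev eA by auto
  define A3 where "A3 = mat n1 n1 (\<lambda>(i,j). B $$ (Suc i, Suc j))"
  have A3: "A3 \<in> carrier_mat n1 n1" unfolding A3_def by simp
  have hA3: "mat_adjoint A3 = A3"
  proof (rule eq_matI)
    fix i j assume "i < dim_row A3" "j < dim_col A3"
    hence ij: "i < n1" "j < n1" using A3 by auto
    have "mat_adjoint A3 $$ (i,j) = cnj (B $$ (Suc j, Suc i))" using ij A3 by (simp add: A3_def)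
    also have "\<dots> = mat_adjoint B $$ (Suc i, Suc j)" using ij B by simp
    also have "\<dots> = A3 $$ (i,j)" using hB ij by (simp add: A3_def)
    finally show "mat_adjoint A3 $$ (i,j) = A3 $$ (i,j)" .
  qed (insert A3, auto)
  have blk: "B = four_block_mat (mat 1 1 (\<lambda>_. e)) (0\<^sub>m 1 n1) (0\<^sub>m n1 1) A3"
  proof (rule eq_matI)
    fix i j assume "i < dim_row (four_block_mat (mat 1 1 (\<lambda>_. e)) (0\<^sub>m 1 n1) (0\<^sub>m n1 1) A3)"
       "j < dim_col (four_block_mat (mat 1 1 (\<lambda>_. e)) (0\<^sub>m 1 n1) (0\<^sub>m n1 1) A3)"
    hence ij: "i < ?n" "j < ?n" using A3 by auto
    show "B $$ (i,j) = four_block_mat (mat 1 1 (\<lambda>_. e)) (0\<^sub>m 1 n1) (0\<^sub>m n1 1) A3 $$ (i,j)"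
    proof (cases "i = 0 \<or> j = 0")
      case True
      then show ?thesis using ij A3 Bi0 B0j by auto
    next
      case False
      then obtain i' j' where "i = Suc i'" "j = Suc j'" by (metis not0_implies_Suc)
      then show ?thesis using ij A3 by (simp add: A3_def)
    qed
  qed (insert A3 B, auto)
  have "char_poly B = char_poly (mat 1 1 (\<lambda>_. e)) * char_poly A3"
    unfolding blk by (rule char_poly_four_block_zeros_col[OF _ _ A3], auto)
  moreover have "char_poly B = char_poly A"
  proof (rule char_poly_similar)
    have "similar_mat_wit B A WH W"
      by (rule similar_mat_witI[of _ _ ?n], insert W WH B A, auto simp: WH_def B_def)
    thus "similar_mat B A" unfolding similar_mat_def by blast
  qed
  ultimately have cpA: "char_poly A = char_poly (mat 1 1 (\<lambda>_. e)) * char_poly A3" by simp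
  have evA3: "\<forall>k. eigenvalue A3 k \<longrightarrow> m \<le> Re k \<and> Re k \<le> M"
  proof (intro allI impI)
    fix k assume "eigenvalue A3 k"
    hence "poly (char_poly A3) k = 0" using eigenvalue_root_char_poly[OF A3] by simp
    hence "poly (char_poly A) k = 0" unfolding cpA by simp
    hence "eigenvalue A k" using eigenvalue_root_char_poly[OF A] by simp
    thus "m \<le> Re k \<and> Re k \<le> M" using ev by auto
  qed
  define x where "x = WH *\<^sub>v v"
  have x: "x \<in> carrier_vec ?n" unfolding x_def using WH v by simp
  have vx: "v = W *\<^sub>v x"
  proof -
    have "W *\<^sub>v x = (W * WH) *\<^sub>v v" unfolding x_def using W(1) WH v by simp
    also have "\<dots> = v" using W(3) v unfolding WH_def by simp
    finally show ?thesis by simp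
  qed
  have q1: "quad_form A v = quad_form B x"
  proof -
    have "quad_form A v = (A *\<^sub>v (W *\<^sub>v x)) \<bullet>c (W *\<^sub>v x)" unfolding quad_form_def vx ..
    also have "\<dots> = (WH *\<^sub>v (A *\<^sub>v (W *\<^sub>v x))) \<bullet>c x"
      unfolding WH_def using W A x by (intro cprod_adj2[of _ ?n ?n]) auto
    also have "WH *\<^sub>v (A *\<^sub>v (W *\<^sub>v x)) = B *\<^sub>v x"
    proof -
      have AW: "A * W \<in> carrier_mat ?n ?n" using A W(1) by simp
      show ?thesis unfolding B2 assoc_mult_mat_vec[OF WH AW x] assoc_mult_mat_vec[OF A W(1) x] ..
    qed
    finally show ?thesis unfolding quad_form_def .
  qed
  have n1: "v \<bullet>c v = x \<bullet>c x"
  proof -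
    have "v \<bullet>c v = (WH *\<^sub>v (W *\<^sub>v x)) \<bullet>c x"
      unfolding vx WH_def using W x by (intro cprod_adj2[of _ ?n ?n]) auto
    also have "WH *\<^sub>v (W *\<^sub>v x) = x" using W x unfolding WH_def
      by (simp add: assoc_mult_mat_vec[symmetric, OF adj_carrier[OF W(1)] W(1) x])
    finally show ?thesis .
  qed
  define x' where "x' = vec n1 (\<lambda>i. x $ Suc i)"
  have x': "x' \<in> carrier_vec n1" unfolding x'_def by simp
  have q2: "quad_form B x = e * (x $ 0 * cnj (x $ 0)) + quad_form A3 x'"
    unfolding qf_sum[OF B x] qf_sum[OF A3 x'] sum.lessThan_Suc_shift
    using Bi0 B0j by (simp add: A3_def x'_def sum_distrib_right distrib_right)
  have n2: "x \<bullet>c x = x $ 0 * cnj (x $ 0) + x' \<bullet>c x'"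
  proof -
    have "x \<bullet>c x = (\<Sum>i<?n. x $ i * cnj (x $ i))" using x by (intro cprod_sum) auto
    moreover have "x' \<bullet>c x' = (\<Sum>i<n1. x' $ i * cnj (x' $ i))" using x' by (intro cprod_sum) auto
    ultimately show ?thesis unfolding sum.lessThan_Suc_shift by (simp add: x'_def)
  qed
  have IH: "m * Re (x' \<bullet>c x') \<le> Re (quad_form A3 x') \<and> Re (quad_form A3 x') \<le> M * Re (x' \<bullet>c x')"
    using Suc.IH[OF A3 hA3 evA3 x'] .
  define a where "a = (cmod (x $ 0))^2"
  have a: "0 \<le> a" unfolding a_def by simp
  have ra: "Re (x $ 0 * cnj (x $ 0)) = a" unfolding a_def by (simp add: complex_mult_cnj cmod_power2)
  have re1: "Re (quad_form A v) = Re e * a + Re (quad_form A3 x')"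
    unfolding q1 q2 using ra by (subst ereal2, simp)
  have re2: "Re (v \<bullet>c v) = a + Re (x' \<bullet>c x')" unfolding n1 n2 using ra by simp
  have "m * a \<le> Re e * a" "Re e * a \<le> M * a" using eb a by (auto intro: mult_right_mono)
  then show ?case unfolding re1 re2 using IH by (simp add: distrib_left)
qed

lemma herm_qf_real: assumes "(A::complex mat) \<in> carrier_mat n n" "mat_adjoint A = A" "v \<in> carrier_vec n"
  shows "quad_form A v = complex_of_real (Re (quad_form A v))"
proof -
  have "quad_form A v = v \<bullet>c (mat_adjoint A *\<^sub>v v)" unfolding quad_form_def
    using cprod_adj[OF assms(1) assms(3) assms(3)] .
  also have "\<dots> = cnj (quad_form A v)" unfolding quad_form_def assms(2)
    using assms by (intro cprod_cnj[of _ n]) auto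
  finally have "quad_form A v = cnj (quad_form A v)" .
  hence "Im (quad_form A v) = 0" using arg_cong[of _ _ Im] by (metis cnj.sel(2) neg_equal_zero)
  thus ?thesis by (simp add: complex_eq_iff)
qed

lemma eig_qf: assumes "eigenvector (A::complex mat) x k"
  shows "quad_form A x = k * (x \<bullet>c x)"
  using assms unfolding eigenvector_def quad_form_def
  by (simp add: cprod_sum[OF refl] sum_distrib_left mult.assoc)

lemma eig_qf_re: assumes "eigenvector (A::complex mat) x k"
  shows "Re (quad_form A x) = Re k * Re (x \<bullet>c x)"
  unfolding eig_qf[OF assms] by (subst cprod_self_real, simp)

lemma herm_eig_real: assumes "(A::complex mat) \<in> carrier_mat n n" "mat_adjoint A = A" "eigenvector A x k"
  shows "k = complex_of_real (Re k)"
proof -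
  have x: "x \<in> carrier_vec n" "x \<noteq> 0\<^sub>v n" using assms unfolding eigenvector_def by auto
  define r where "r = Re (x \<bullet>c x)"
  have r: "0 < r" using cprod_self_pos[OF x] r_def by simp
  have "k * complex_of_real r = complex_of_real (Re (quad_form A x))"
    using herm_qf_real[OF assms(1,2) x(1)] eig_qf[OF assms(3)] cprod_self_real r_def by metis
  hence "Im (k * complex_of_real r) = 0" by (metis Im_complex_of_real)
  hence "Im k = 0" using r by simp
  thus ?thesis by (simp add: complex_eq_iff)
qed

lemma adj_one: "mat_adjoint (1\<^sub>m n :: complex mat) = 1\<^sub>m n"
  by (rule eq_matI, auto)

lemma inv_lemma:
  fixes A :: "complex mat"
  assumes A: "A \<in> carrier_mat n n" and h: "mat_adjoint A = A" and m: "0 < m"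
    and ev: "\<forall>k. eigenvalue A k \<longrightarrow> m \<le> Re k \<and> Re k \<le> M"
  shows "minv A \<in> carrier_mat n n \<and> mat_adjoint (minv A) = minv A \<and>
    (\<forall>y \<in> carrier_vec n. Re (y \<bullet>c y) / M \<le> Re (quad_form (minv A) y)
       \<and> Re (quad_form (minv A) y) \<le> Re (y \<bullet>c y) / m)"
proof -
  have "det A \<noteq> 0"
  proof
    assume "det A = 0"
    then obtain v where v: "v \<in> carrier_vec n" "v \<noteq> 0\<^sub>v n" "A *\<^sub>v v = 0\<^sub>v n"
      using det_0_iff_vec_prod_zero[OF A] by blast
    have "eigenvector A v 0" unfolding eigenvector_def using v A by auto
    hence "eigenvalue A 0" unfolding eigenvalue_def by blast
    thus False using ev m by fastforce
  qed
  from det_non_zero_imp_unit[OF A this]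
  have U: "A \<in> Units (ring_mat TYPE(complex) n ())" .
  have "mat_inverse A \<noteq> None" using mat_inverse(1)[OF A, where b="()"] U by blast
  then obtain B where "mat_inverse A = Some B" by blast
  from mat_inverse(2)[OF A this] this
  have AB: "A * B = 1\<^sub>m n" and BA: "B * A = 1\<^sub>m n" and B: "B \<in> carrier_mat n n" and mB: "minv A = B"
    unfolding minv_def by auto
  have hB: "mat_adjoint B = B"
  proof -
    have "mat_adjoint B * A = 1\<^sub>m n"
      using adj_mult[OF A B] AB h adj_one by simp
    hence "B = (mat_adjoint B * A) * B" using B by simp
    also have "\<dots> = mat_adjoint B * (A * B)" using B A by (intro assoc_mult_mat[of _ n n]) auto
    also have "\<dots> = mat_adjoint B" using AB B by simp
    finally show ?thesis by simp
  qed
  have evB: "\<forall>k. eigenvalue B k \<longrightarrow> 1 / M \<le> Re k \<and> Re k \<le> 1 / m"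
  proof (intro allI impI)
    fix k assume "eigenvalue B k"
    then obtain y where y: "eigenvector B y k" unfolding eigenvalue_def by blast
    hence yc: "y \<in> carrier_vec n" "y \<noteq> 0\<^sub>v n" "B *\<^sub>v y = k \<cdot>\<^sub>v y" using B unfolding eigenvector_def by auto
    have kr: "k = complex_of_real (Re k)" using herm_eig_real[OF B hB y] .
    have "y = (A * B) *\<^sub>v y" using AB yc(1) by simp
    also have "\<dots> = A *\<^sub>v (B *\<^sub>v y)" by (rule assoc_mult_mat_vec[OF A B yc(1)])
    also have "\<dots> = k \<cdot>\<^sub>v (A *\<^sub>v y)" using yc mult_mat_vec[OF A] by simp
    finally have yk: "y = k \<cdot>\<^sub>v (A *\<^sub>v y)" .
    have k0: "k \<noteq> 0"
    proof
      assume "k = 0"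
      moreover have "0 \<cdot>\<^sub>v (A *\<^sub>v y) = 0\<^sub>v n" by (rule eq_vecI, insert A, auto)
      ultimately have "y = 0\<^sub>v n" using yk by simp
      thus False using yc by simp
    qed
    have "A *\<^sub>v y = (1 / k) \<cdot>\<^sub>v y"
    proof -
      have "(1 / k) \<cdot>\<^sub>v y = (1 / k) \<cdot>\<^sub>v (k \<cdot>\<^sub>v (A *\<^sub>v y))" using yk by metis
      also have "\<dots> = A *\<^sub>v y" using k0 by (simp add: smult_smult_assoc)
      finally show ?thesis by simp
    qed
    hence "eigenvector A y (1 / k)" unfolding eigenvector_def using yc A by auto
    hence "eigenvalue A (1 / k)" unfolding eigenvalue_def by blast
    hence b: "m \<le> Re (1 / k)" "Re (1 / k) \<le> M" using ev by auto
    define r where "r = Re k"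
    have "Re (1 / k) = 1 / r" unfolding r_def by (subst kr, simp)
    hence b2: "m \<le> 1 / r" "1 / r \<le> M" using b by auto
    have "0 < 1 / r" using b2 m by linarith
    hence rp: "0 < r" by simp
    have Mp: "0 < M" using b2 \<open>0 < 1 / r\<close> by linarith
    have "m * r \<le> 1" using b2(1) rp by (simp add: field_simps)
    hence "r \<le> 1 / m" using m by (simp add: field_simps)
    moreover have "1 \<le> M * r" using b2(2) rp by (simp add: field_simps)
    hence "1 / M \<le> r" using Mp by (simp add: field_simps)
    ultimately show "1 / M \<le> Re k \<and> Re k \<le> 1 / m" unfolding r_def by simp
  qed
  have "\<forall>y \<in> carrier_vec n. Re (y \<bullet>c y) / M \<le> Re (quad_form B y) \<and> Re (quad_form B y) \<le> Re (y \<bullet>c y) / m"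
    using rayleigh[OF B hB evB] by simp
  thus ?thesis using mB B hB by simp
qed

theorem mainTheorem1:
  fixes Nd Nm :: nat and Phi Psi :: "complex mat" and g :: "complex vec"
    and lmax lmin \<delta> :: real
  assumes "0 < Nd" and "Nd \<le> Nm"
    and "herm_pos_def Nm Phi"
    and "eigenvalue Phi (complex_of_real lmax)" and "\<forall>k. eigenvalue Phi k \<longrightarrow> Re k \<le> lmax"
    and "eigenvalue Phi (complex_of_real lmin)" and "\<forall>k. eigenvalue Phi k \<longrightarrow> lmin \<le> Re k"
    and "g \<in> carrier_vec Nm" and "g \<noteq> 0\<^sub>v Nm"
    and "Psi \<in> carrier_mat Nd Nm"
    and "0 < \<delta>" and "\<delta> < 1"
    and "\<forall>k. eigenvalue (Psi * mat_adjoint Psi) k \<longrightarrow> k \<in> complex_of_real ` {1 - \<delta> .. 1 + \<delta>}"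
    and "(1 - \<delta>) * (cvec_norm g)^2 \<le> (cvec_norm (Psi *\<^sub>v g))^2"
    and "(cvec_norm (Psi *\<^sub>v g))^2 \<le> (1 + \<delta>) * (cvec_norm g)^2"
  shows "lmin / (cvec_norm g)^2 \<le> p_mvdr Phi g \<and> p_mvdr Phi g \<le> lmax / (cvec_norm g)^2
    \<and> (1 - \<delta>) * lmin / ((1 + \<delta>) * (cvec_norm g)^2) \<le> p_cmvdr Phi Psi g
    \<and> p_cmvdr Phi Psi g \<le> (1 + \<delta>) * lmax / ((1 - \<delta>) * (cvec_norm g)^2)
    \<and> (1 - \<delta>) * lmin / ((1 + \<delta>) * (cvec_norm g)^2) - lmax / (cvec_norm g)^2
        \<le> p_cmvdr Phi Psi g - p_mvdr Phi g
    \<and> p_cmvdr Phi Psi g - p_mvdr Phi g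
        \<le> (1 + \<delta>) * lmax / ((1 - \<delta>) * (cvec_norm g)^2) - lmin / (cvec_norm g)^2"
proof -
  note as = assms
  have Phi: "Phi \<in> carrier_mat Nm Nm" and hPhi: "mat_adjoint Phi = Phi"
    and pd: "\<forall>v \<in> carrier_vec Nm. v \<noteq> 0\<^sub>v Nm \<longrightarrow> 0 < Re (quad_form Phi v)"
    using as(3) unfolding herm_pos_def_def by auto
  have evPhi: "\<forall>k. eigenvalue Phi k \<longrightarrow> lmin \<le> Re k \<and> Re k \<le> lmax" using as(5,7) by auto
  obtain v0 where v0: "eigenvector Phi v0 (complex_of_real lmin)" using as(6) unfolding eigenvalue_def by blast
  have v0c: "v0 \<in> carrier_vec Nm" "v0 \<noteq> 0\<^sub>v Nm" using v0 Phi unfolding eigenvector_def by auto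
  have "Re (quad_form Phi v0) = lmin * Re (v0 \<bullet>c v0)" using eig_qf_re[OF v0] by simp
  moreover have "0 < Re (quad_form Phi v0)" using pd v0c by auto
  moreover have "0 < Re (v0 \<bullet>c v0)" using cprod_self_pos[OF v0c] .
  ultimately have lmin: "0 < lmin" by (metis zero_less_mult_pos2)
  have lmm: "lmin \<le> lmax" using as(5) as(6) by fastforce
  define G where "G = (cvec_norm g)^2"
  have G: "0 < G" unfolding G_def cvec_norm_sq using cprod_self_pos[OF as(8,9)] .
  have GG: "Re (g \<bullet>c g) = G" unfolding G_def cvec_norm_sq ..
  from inv_lemma[OF Phi hPhi lmin evPhi] as(8)
  have q1: "G / lmax \<le> Re (quad_form (minv Phi) g)" "Re (quad_form (minv Phi) g) \<le> G / lmin"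
    by (auto simp: GG)
  have gl: "0 < G / lmax" using G lmin lmm by simp
  have P1: "lmin / G \<le> p_mvdr Phi g" "p_mvdr Phi g \<le> lmax / G"
  proof -
    have "inverse (G / lmin) \<le> p_mvdr Phi g" unfolding p_mvdr_def
      using le_imp_inverse_le[OF q1(2)] gl q1(1) by linarith
    thus "lmin / G \<le> p_mvdr Phi g" by simp
    have "p_mvdr Phi g \<le> inverse (G / lmax)" unfolding p_mvdr_def
      using le_imp_inverse_le[OF q1(1) gl] .
    thus "p_mvdr Phi g \<le> lmax / G" by simp
  qed
  define PH where "PH = mat_adjoint Psi"
  have Psi: "Psi \<in> carrier_mat Nd Nm" using as(10) .
  have PH: "PH \<in> carrier_mat Nm Nd" unfolding PH_def using Psi by simp
  define S where "S = Psi * PH"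
  have S: "S \<in> carrier_mat Nd Nd" unfolding S_def using Psi PH by simp
  have hS: "mat_adjoint S = S" unfolding S_def PH_def using adj_mult[OF Psi adj_carrier[OF Psi]] adj_adj by simp
  have evS: "\<forall>k. eigenvalue S k \<longrightarrow> 1 - \<delta> \<le> Re k \<and> Re k \<le> 1 + \<delta>"
    using as(13) unfolding S_def PH_def by fastforce
  have qS: "Re (quad_form S x) = Re ((PH *\<^sub>v x) \<bullet>c (PH *\<^sub>v x))" if x: "x \<in> carrier_vec Nd" for x
  proof -
    have "quad_form S x = (Psi *\<^sub>v (PH *\<^sub>v x)) \<bullet>c x" unfolding quad_form_def S_def
      assoc_mult_mat_vec[OF Psi PH x] ..
    also have "\<dots> = (PH *\<^sub>v x) \<bullet>c (PH *\<^sub>v x)" unfolding PH_def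
      using cprod_adj[OF Psi mult_mat_vec_carrier[OF adj_carrier[OF Psi] x] x] .
    finally show ?thesis by simp
  qed
  define A where "A = Psi * Phi * PH"
  have A: "A \<in> carrier_mat Nd Nd" unfolding A_def using Psi Phi PH by simp
  have A2: "A = Psi * (Phi * PH)" unfolding A_def using Psi Phi PH by simp
  have hA: "mat_adjoint A = A"
  proof -
    have PP: "Phi * PH \<in> carrier_mat Nm Nd" using Phi PH by simp
    have "mat_adjoint A = mat_adjoint (Phi * PH) * mat_adjoint Psi"
      unfolding A2 using adj_mult[OF Psi PP] .
    also have "mat_adjoint (Phi * PH) = mat_adjoint PH * mat_adjoint Phi" by (rule adj_mult[OF Phi PH])
    also have "mat_adjoint PH * mat_adjoint Phi * mat_adjoint Psi = Psi * Phi * PH"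
      unfolding PH_def adj_adj hPhi ..
    finally show ?thesis unfolding A_def .
  qed
  have qA: "Re (quad_form A x) = Re (quad_form Phi (PH *\<^sub>v x))" if x: "x \<in> carrier_vec Nd" for x
  proof -
    have PP: "Phi * PH \<in> carrier_mat Nm Nd" using Phi PH by simp
    have "quad_form A x = (Psi *\<^sub>v (Phi *\<^sub>v (PH *\<^sub>v x))) \<bullet>c x" unfolding quad_form_def A2
      assoc_mult_mat_vec[OF Psi PP x] assoc_mult_mat_vec[OF Phi PH x] ..
    also have "\<dots> = (Phi *\<^sub>v (PH *\<^sub>v x)) \<bullet>c (PH *\<^sub>v x)" unfolding PH_def
      using cprod_adj[OF Psi mult_mat_vec_carrier[OF Phi mult_mat_vec_carrier[OF adj_carrier[OF Psi] x]] x] by simp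
    finally show ?thesis unfolding quad_form_def by simp
  qed
  have bA: "(1 - \<delta>) * lmin * Re (x \<bullet>c x) \<le> Re (quad_form A x) \<and>
      Re (quad_form A x) \<le> (1 + \<delta>) * lmax * Re (x \<bullet>c x)" if x: "x \<in> carrier_vec Nd" for x
  proof -
    have y: "PH *\<^sub>v x \<in> carrier_vec Nm" using PH x by simp
    from rayleigh[OF Phi hPhi evPhi y]
    have r1: "lmin * Re ((PH *\<^sub>v x) \<bullet>c (PH *\<^sub>v x)) \<le> Re (quad_form A x)"
      "Re (quad_form A x) \<le> lmax * Re ((PH *\<^sub>v x) \<bullet>c (PH *\<^sub>v x))" unfolding qA[OF x] by auto
    from rayleigh[OF S hS evS x]
    have r2: "(1 - \<delta>) * Re (x \<bullet>c x) \<le> Re ((PH *\<^sub>v x) \<bullet>c (PH *\<^sub>v x))"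
      "Re ((PH *\<^sub>v x) \<bullet>c (PH *\<^sub>v x)) \<le> (1 + \<delta>) * Re (x \<bullet>c x)" unfolding qS[OF x] by auto
    have "lmin * ((1 - \<delta>) * Re (x \<bullet>c x)) \<le> lmin * Re ((PH *\<^sub>v x) \<bullet>c (PH *\<^sub>v x))"
      using r2(1) lmin by (intro mult_left_mono) auto
    moreover have "lmax * Re ((PH *\<^sub>v x) \<bullet>c (PH *\<^sub>v x)) \<le> lmax * ((1 + \<delta>) * Re (x \<bullet>c x))"
      using r2(2) lmin lmm by (intro mult_left_mono) auto
    ultimately show ?thesis using r1 by (simp add: mult_ac)
  qed
  have evA: "\<forall>k. eigenvalue A k \<longrightarrow> (1 - \<delta>) * lmin \<le> Re k \<and> Re k \<le> (1 + \<delta>) * lmax"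
  proof (intro allI impI)
    fix k assume "eigenvalue A k"
    then obtain x where x: "eigenvector A x k" unfolding eigenvalue_def by blast
    hence xc: "x \<in> carrier_vec Nd" "x \<noteq> 0\<^sub>v Nd" using A unfolding eigenvector_def by auto
    have xp: "0 < Re (x \<bullet>c x)" using cprod_self_pos[OF xc] .
    have "(1 - \<delta>) * lmin * Re (x \<bullet>c x) \<le> Re k * Re (x \<bullet>c x)"
      "Re k * Re (x \<bullet>c x) \<le> (1 + \<delta>) * lmax * Re (x \<bullet>c x)"
      using bA[OF xc(1)] eig_qf_re[OF x] by auto
    thus "(1 - \<delta>) * lmin \<le> Re k \<and> Re k \<le> (1 + \<delta>) * lmax" using xp by auto
  qed
  have mpos: "0 < (1 - \<delta>) * lmin" using as(12) lmin by simp
  define h where "h = Psi *\<^sub>v g"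
  have hc: "h \<in> carrier_vec Nd" unfolding h_def using Psi as(8) by simp
  from inv_lemma[OF A hA mpos evA] hc
  have q2: "Re (h \<bullet>c h) / ((1 + \<delta>) * lmax) \<le> Re (quad_form (minv A) h)"
    "Re (quad_form (minv A) h) \<le> Re (h \<bullet>c h) / ((1 - \<delta>) * lmin)"
    and mA: "minv A \<in> carrier_mat Nd Nd" by auto
  have qc: "quad_form (PH * minv A * Psi) g = quad_form (minv A) h"
  proof -
    have PA: "PH * minv A \<in> carrier_mat Nm Nd" using PH mA by simp
    have "quad_form (PH * minv A * Psi) g = (PH *\<^sub>v (minv A *\<^sub>v h)) \<bullet>c g"
      unfolding quad_form_def h_def assoc_mult_mat_vec[OF PA Psi as(8)]
        assoc_mult_mat_vec[OF PH mA hc[unfolded h_def]] ..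
    also have "\<dots> = (minv A *\<^sub>v h) \<bullet>c h" unfolding PH_def
      using cprod_adj[OF adj_carrier[OF Psi] mult_mat_vec_carrier[OF mA hc] as(8)]
      unfolding adj_adj h_def[symmetric] .
    finally show ?thesis unfolding quad_form_def .
  qed
  have hb: "(1 - \<delta>) * G \<le> Re (h \<bullet>c h)" "Re (h \<bullet>c h) \<le> (1 + \<delta>) * G"
    using as(14,15) unfolding h_def G_def cvec_norm_sq by auto
  define Q where "Q = Re (quad_form (minv A) h)"
  have pc: "p_cmvdr Phi Psi g = inverse Q" unfolding p_cmvdr_def Q_def using qc unfolding PH_def A_def by simp
  have d1: "0 < 1 - \<delta>" "0 < 1 + \<delta>" using as(11,12) by auto
  have lmx: "0 < lmax" using lmin lmm by simp
  have Qlo: "(1 - \<delta>) * G / ((1 + \<delta>) * lmax) \<le> Q"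
  proof -
    have "(1 - \<delta>) * G / ((1 + \<delta>) * lmax) \<le> Re (h \<bullet>c h) / ((1 + \<delta>) * lmax)"
      using hb(1) d1 lmx by (intro divide_right_mono) auto
    thus ?thesis using q2(1) unfolding Q_def by linarith
  qed
  have Qhi: "Q \<le> (1 + \<delta>) * G / ((1 - \<delta>) * lmin)"
  proof -
    have "Re (h \<bullet>c h) / ((1 - \<delta>) * lmin) \<le> (1 + \<delta>) * G / ((1 - \<delta>) * lmin)"
      using hb(2) d1 lmin by (intro divide_right_mono) auto
    thus ?thesis using q2(2) unfolding Q_def by linarith
  qed
  have Qlp: "0 < (1 - \<delta>) * G / ((1 + \<delta>) * lmax)" using d1 G lmx by simp
  have P2: "(1 - \<delta>) * lmin / ((1 + \<delta>) * G) \<le> p_cmvdr Phi Psi g"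
  proof -
    have "inverse ((1 + \<delta>) * G / ((1 - \<delta>) * lmin)) \<le> inverse Q"
      using le_imp_inverse_le[OF Qhi] Qlp Qlo by linarith
    thus ?thesis unfolding pc by (simp add: field_simps)
  qed
  have P3: "p_cmvdr Phi Psi g \<le> (1 + \<delta>) * lmax / ((1 - \<delta>) * G)"
  proof -
    have "inverse Q \<le> inverse ((1 - \<delta>) * G / ((1 + \<delta>) * lmax))"
      using le_imp_inverse_le[OF Qlo Qlp] .
    thus ?thesis unfolding pc by (simp add: field_simps)
  qed
  show ?thesis using P1 P2 P3 unfolding G_def by linarith
qed

end
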